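(* For every integer $n\ge 1$, let $T_n$ be the triangular grid graph with $n$ rows of triangles and let $a,b$ be two distinct vertices of $T_n$ of degree $2$. Then, with unit edge resistances, \[ r_{T_n}(a,b)\ \ge\ \frac12\left(1+\frac12+\frac13+\cdots+\frac1n\right). \] In particular $r_{T_n}(a,b)\to\infty$ as $n\to\infty$.
   Context: The triangular grid graph $T_n$ has vertex set $\{(i,j): 0\le j\le i\le n\}$ (so $(n+1)(n+2)/2$ vertices, arranged in rows $i=0,\dots,n$), and edges $\{(i,j),(i,j+1)\}$, $\{(i,j),(i+1,j)\}$ and $\{(i,j),(i+1,j+1)\}$ whenever both endpoints are vertices. Its degree-2 vertices are the three corners $(0,0)$, $(n,0)$, $(n,n)$. Each edge has resistance $1$. The resistance distance $r_G(u,v)$ is the potential difference between $u$ and $v$ when one unit of current enters at $u$ and leaves at $v$; equivalently $r_G(u,v)=(\mathbf e_u-\mathbf e_v)^T L^\dagger(\mathbf e_u-\mathbf e_v)$ with $L$ the combinatorial Laplacian of $G$. *)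

theory Defs
  imports Main Complex_Main
begin

text \<open>A finite graph is given by a vertex set V and a symmetric adjacency relation E.
  All edges have unit resistance.\<close>

definition nbrs :: "'v set \<Rightarrow> ('v \<Rightarrow> 'v \<Rightarrow> bool) \<Rightarrow> 'v \<Rightarrow> 'v set" where
  "nbrs V E v = {w \<in> V. E v w}"

definition gdegree :: "'v set \<Rightarrow> ('v \<Rightarrow> 'v \<Rightarrow> bool) \<Rightarrow> 'v \<Rightarrow> nat" where
  "gdegree V E v = card (nbrs V E v)"

definition laplacian :: "'v set \<Rightarrow> ('v \<Rightarrow> 'v \<Rightarrow> bool) \<Rightarrow> ('v \<Rightarrow> real) \<Rightarrow> 'v \<Rightarrow> real" where
  "laplacian V E phi v = (\<Sum>w\<in>nbrs V E v. phi v - phi w)"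

text \<open>phi is a potential for the flow of one unit of current entering at a and leaving at b
  (Kirchhoff + Ohm with unit resistances): L phi = e_a - e_b.\<close>
definition unit_current_potential ::
  "'v set \<Rightarrow> ('v \<Rightarrow> 'v \<Rightarrow> bool) \<Rightarrow> 'v \<Rightarrow> 'v \<Rightarrow> ('v \<Rightarrow> real) \<Rightarrow> bool" where
  "unit_current_potential V E a b phi \<longleftrightarrow>
     (\<forall>v\<in>V. laplacian V E phi v = (if v = a then 1 else if v = b then -1 else 0))"

text \<open>Resistance distance: the potential difference between a and b (well defined for
  connected graphs, as solutions differ by constants on connected graphs).\<close>
definition resistance :: "'v set \<Rightarrow> ('v \<Rightarrow> 'v \<Rightarrow> bool) \<Rightarrow> 'v \<Rightarrow> 'v \<Rightarrow> real" where
  "resistance V E a b =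
     (let phi = (SOME phi. unit_current_potential V E a b phi) in phi a - phi b)"

definition tri_V :: "nat \<Rightarrow> (nat \<times> nat) set" where
  "tri_V n = {(i, j). j \<le> i \<and> i \<le> n}"

definition tri_E :: "nat \<Rightarrow> nat \<times> nat \<Rightarrow> nat \<times> nat \<Rightarrow> bool" where
  "tri_E n u v \<longleftrightarrow> u \<in> tri_V n \<and> v \<in> tri_V n \<and>
     ((fst v = fst u \<and> snd v = snd u + 1) \<or> (fst u = fst v \<and> snd u = snd v + 1) \<or>
      (fst v = fst u + 1 \<and> snd v = snd u) \<or> (fst u = fst v + 1 \<and> snd u = snd v) \<or>
      (fst v = fst u + 1 \<and> snd v = snd u + 1) \<or> (fst u = fst v + 1 \<and> snd u = snd v + 1))"

end

theory Submission
  imports Defs "Jordan_Normal_Form.Determinant"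
begin


lemma solvable_system:
  fixes c :: "'v \<Rightarrow> 'v \<Rightarrow> real" and I :: "'v set"
  assumes fin: "finite I"
    and inj: "\<And>phi. (\<forall>v\<in>I. (\<Sum>w\<in>I. c v w * phi w) = 0) \<Longrightarrow> (\<forall>v\<in>I. phi v = 0)"
  shows "\<exists>phi. \<forall>v\<in>I. (\<Sum>w\<in>I. c v w * phi w) = r v"
proof -
  define N where "N = card I"
  obtain h where h: "bij_betw h {0..<N} I" using ex_bij_betw_nat_finite[OF fin] N_def by blast
  define g where "g = inv_into {0..<N} h"
  have hg: "\<And>w. w \<in> I \<Longrightarrow> h (g w) = w" "\<And>w. w \<in> I \<Longrightarrow> g w < N"
    using h unfolding g_def by (auto simp: bij_betw_def f_inv_into_f inv_into_into)
  have gh: "\<And>j. j < N \<Longrightarrow> g (h j) = j" using h unfolding g_def bij_betw_def by auto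
  have hI: "\<And>j. j < N \<Longrightarrow> h j \<in> I" using h unfolding bij_betw_def by auto
  define A where "A = mat N N (\<lambda>(i,j). c (h i) (h j))"
  have A: "A \<in> carrier_mat N N" unfolding A_def by simp
  have sumre: "\<And>v f. (\<Sum>w\<in>I. c v w * f w) = (\<Sum>j<N. c v (h j) * f (h j))"
  proof -
    fix v f
    show "(\<Sum>w\<in>I. c v w * f w) = (\<Sum>j<N. c v (h j) * f (h j))"
      using sum.reindex[of h "{0..<N}" "\<lambda>w. c v w * f w"] h
      by (simp add: bij_betw_def lessThan_atLeast0)
  qed
  have Av: "\<And>x i. x \<in> carrier_vec N \<Longrightarrow> i < N \<Longrightarrow> (A *\<^sub>v x) $ i = (\<Sum>j<N. c (h i) (h j) * x $ j)"
    unfolding A_def by (simp add: mult_mat_vec_def scalar_prod_def lessThan_atLeast0)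
  have "det A \<noteq> 0"
  proof
    assume "det A = 0"
    then obtain x where x: "x \<in> carrier_vec N" "x \<noteq> 0\<^sub>v N" "A *\<^sub>v x = 0\<^sub>v N"
      using det_0_iff_vec_prod_zero_field[OF A] by blast
    define phi where "phi w = x $ g w" for w
    have "\<forall>v\<in>I. (\<Sum>w\<in>I. c v w * phi w) = 0"
    proof
      fix v assume v: "v \<in> I"
      have "(\<Sum>w\<in>I. c v w * phi w) = (\<Sum>j<N. c (h (g v)) (h j) * x $ j)"
        by (simp add: sumre phi_def gh hg v)
      also have "\<dots> = (A *\<^sub>v x) $ g v" using Av[OF x(1) hg(2)[OF v]] by simp
      also have "\<dots> = 0" using x hg v by simp
      finally show "(\<Sum>w\<in>I. c v w * phi w) = 0" .
    qed
    then have "\<forall>v\<in>I. phi v = 0" by (rule inj)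
    then have "x = 0\<^sub>v N" using x hI gh by (intro eq_vecI) (auto simp: phi_def, metis)
    with x show False by simp
  qed
  define rv where "rv = vec N (\<lambda>i. r (h i))"
  define y where "y = (1 / det A) \<cdot>\<^sub>v (adj_mat A *\<^sub>v rv)"
  have y: "y \<in> carrier_vec N" unfolding y_def rv_def using adj_mat(1)[OF A] by simp
  have "A *\<^sub>v y = (1 / det A) \<cdot>\<^sub>v ((A * adj_mat A) *\<^sub>v rv)"
    unfolding y_def using adj_mat(1)[OF A] A
    by (simp add: mult_mat_vec rv_def)
  also have "\<dots> = (1 / det A) \<cdot>\<^sub>v ((det A \<cdot>\<^sub>m 1\<^sub>m N) *\<^sub>v rv)" using adj_mat(2)[OF A] by simp
  also have "\<dots> = rv" using \<open>det A \<noteq> 0\<close>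
    by (intro eq_vecI) (auto simp: rv_def)
  finally have Ay: "A *\<^sub>v y = rv" .
  define phi where "phi w = y $ g w" for w
  show ?thesis
  proof (intro exI ballI)
    fix v assume v: "v \<in> I"
    have "(\<Sum>w\<in>I. c v w * phi w) = (\<Sum>j<N. c (h (g v)) (h j) * y $ j)"
      by (simp add: sumre phi_def gh hg v)
    also have "\<dots> = (A *\<^sub>v y) $ g v" using Av[OF y hg(2)[OF v]] by simp
    also have "\<dots> = r v" using Ay hg v by (simp add: rv_def)
    finally show "(\<Sum>w\<in>I. c v w * phi w) = r v" .
  qed
qed


lemma cauchy_schwarz_sum:
  fixes x :: "'a \<Rightarrow> real"
  assumes "finite P"
  shows "(\<Sum>p\<in>P. x p)^2 \<le> real (card P) * (\<Sum>p\<in>P. (x p)^2)"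
proof -
  have "0 \<le> (\<Sum>i\<in>P. \<Sum>j\<in>P. (x i - x j)^2)" by (intro sum_nonneg) auto
  also have "\<dots> = (\<Sum>i\<in>P. \<Sum>j\<in>P. (x i)^2 + (x j)^2 - 2 * x i * x j)"
    by (simp add: power2_diff)
  also have "\<dots> = 2 * (real (card P) * (\<Sum>p\<in>P. (x p)^2)) - 2 * (\<Sum>p\<in>P. x p)^2"
    by (simp add: sum_subtractf sum.distrib sum_distrib_left sum_distrib_right power2_eq_square
          algebra_simps)
  finally show ?thesis by simp
qed

definition dpairs :: "'v set \<Rightarrow> ('v \<Rightarrow> 'v \<Rightarrow> bool) \<Rightarrow> 'v set \<Rightarrow> ('v \<times> 'v) set" where
  "dpairs V E S = {(v,w). v \<in> S \<and> w \<in> V \<and> E v w}"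

lemma sum_nbrs_pairs:
  assumes "finite V" "S \<subseteq> V"
  shows "(\<Sum>v\<in>S. \<Sum>w\<in>nbrs V E v. F v w) = (\<Sum>(v,w)\<in>dpairs V E S. F v w)"
proof -
  have "finite S" using assms finite_subset by blast
  moreover have "\<forall>v\<in>S. finite (nbrs V E v)" using assms by (simp add: nbrs_def)
  ultimately have "(\<Sum>v\<in>S. \<Sum>w\<in>nbrs V E v. F v w) = (\<Sum>(v,w)\<in>Sigma S (nbrs V E). F v w)"
    by (rule sum.Sigma)
  also have "Sigma S (nbrs V E) = dpairs V E S" using assms(2) by (auto simp: nbrs_def dpairs_def)
  finally show ?thesis .
qed

lemma finite_dpairs: "finite S \<Longrightarrow> finite V \<Longrightarrow> finite (dpairs V E S)"
  by (rule finite_subset[of _ "S \<times> V"]) (auto simp: dpairs_def)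

lemma sum_swap:
  assumes sym: "\<And>u v. E u v \<longleftrightarrow> E v u"
  shows "(\<Sum>(v,w)\<in>dpairs V E V. F v w) = (\<Sum>(v,w)\<in>dpairs V E V. F w v)"
proof -
  have "inj_on prod.swap (dpairs V E V)" by (rule inj_onI) (metis swap_swap)
  moreover have "prod.swap ` dpairs V E V = dpairs V E V"
    using sym by (auto simp: dpairs_def image_iff)
  ultimately show ?thesis
    using sum.reindex[of prod.swap "dpairs V E V" "\<lambda>(v,w). F v w"]
    by (simp add: case_prod_unfold)
qed

lemma flux:
  assumes fin: "finite V" and S: "S \<subseteq> V" and sym: "\<And>u v. E u v \<longleftrightarrow> E v u"
  shows "(\<Sum>v\<in>S. laplacian V E phi v) =
    (\<Sum>(v,w)\<in>{(v,w). v \<in> S \<and> w \<in> V - S \<and> E v w}. phi v - phi w)"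
proof -
  have "(\<Sum>v\<in>S. laplacian V E phi v) = (\<Sum>(v,w)\<in>dpairs V E S. phi v - phi w)"
    unfolding laplacian_def by (rule sum_nbrs_pairs[OF fin S])
  also have "dpairs V E S = dpairs S E S \<union> {(v,w). v \<in> S \<and> w \<in> V - S \<and> E v w}"
    using S by (auto simp: dpairs_def)
  also have "(\<Sum>(v,w)\<in>\<dots>. phi v - phi w) = (\<Sum>(v,w)\<in>dpairs S E S. phi v - phi w) +
      (\<Sum>(v,w)\<in>{(v,w). v \<in> S \<and> w \<in> V - S \<and> E v w}. phi v - phi w)"
    apply (rule sum.union_disjoint)
    using finite_dpairs[of S S E] fin S finite_subset
    by (auto simp: dpairs_def intro: finite_subset[of _ "V \<times> V"])
  also have "(\<Sum>(v,w)\<in>dpairs S E S. phi v - phi w) = 0"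
  proof -
    have "(\<Sum>(v,w)\<in>dpairs S E S. phi v - phi w) = (\<Sum>(v,w)\<in>dpairs S E S. phi w - phi v)"
      by (rule sum_swap[OF sym])
    also have "\<dots> = - (\<Sum>(v,w)\<in>dpairs S E S. phi v - phi w)"
      by (simp add: case_prod_unfold sum_negf[symmetric])
    finally show ?thesis by simp
  qed
  finally show ?thesis by simp
qed

lemma energy_identity:
  assumes fin: "finite V" and sym: "\<And>u v. E u v \<longleftrightarrow> E v u"
  shows "(\<Sum>v\<in>V. psi v * laplacian V E phi v) =
     (1/2) * (\<Sum>(v,w)\<in>dpairs V E V. (psi v - psi w) * (phi v - phi w))"
proof -
  have a: "(\<Sum>v\<in>V. psi v * laplacian V E phi v) = (\<Sum>(v,w)\<in>dpairs V E V. psi v * (phi v - phi w))"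
    unfolding laplacian_def sum_distrib_left by (rule sum_nbrs_pairs[OF fin]) simp
  have b: "(\<Sum>(v,w)\<in>dpairs V E V. psi v * (phi v - phi w)) = (\<Sum>(v,w)\<in>dpairs V E V. psi w * (phi w - phi v))"
    by (rule sum_swap[OF sym])
  have "(\<Sum>(v,w)\<in>dpairs V E V. (psi v - psi w) * (phi v - phi w)) =
     (\<Sum>(v,w)\<in>dpairs V E V. psi v * (phi v - phi w)) + (\<Sum>(v,w)\<in>dpairs V E V. psi w * (phi w - phi v))"
    by (simp add: case_prod_unfold sum.distrib[symmetric] algebra_simps)
  with a b show ?thesis by simp
qed



lemma exists_potential:
  assumes fin: "finite V" and sym: "\<And>u v. E u v \<longleftrightarrow> E v u"
    and aV: "a \<in> V" and bV: "b \<in> V" and ab: "a \<noteq> b"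
    and conn: "\<And>psi :: _ \<Rightarrow> real. (\<forall>v\<in>V. \<forall>w\<in>V. E v w \<longrightarrow> psi v = psi w) \<Longrightarrow> \<forall>v\<in>V. psi v = psi b"
  shows "\<exists>phi. unit_current_potential V E a b phi"
proof -
  define c where "c v w = (if v = b then (if w = b then 1 else 0)
     else (if w = v then real (card (nbrs V E v)) else 0) - (if E v w then 1 else 0))" for v w
  have cM: "(\<Sum>w\<in>V. c v w * phi w) = (if v = b then phi b else laplacian V E phi v)"
    if v: "v \<in> V" for phi v
  proof (cases "v = b")
    case True
    have "(\<Sum>w\<in>V. c v w * phi w) = (\<Sum>w\<in>V. if w = b then phi b else 0)"
      by (intro sum.cong) (auto simp: c_def True)
    with bV fin True show ?thesis by simp
  next
    case False
    have "(\<Sum>w\<in>V. c v w * phi w) = (\<Sum>w\<in>V. (if w = v then real (card (nbrs V E v)) * phi w else 0))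
        - (\<Sum>w\<in>V. (if E v w then phi w else 0))"
      unfolding sum_subtractf[symmetric] by (intro sum.cong) (auto simp: c_def False algebra_simps)
    also have "\<dots> = real (card (nbrs V E v)) * phi v - (\<Sum>w\<in>nbrs V E v. phi w)"
      using v fin by (simp add: nbrs_def sum.inter_filter)
    also have "\<dots> = laplacian V E phi v"
      by (simp add: laplacian_def sum_subtractf)
    finally show ?thesis using False by simp
  qed
  have "\<exists>phi. \<forall>v\<in>V. (\<Sum>w\<in>V. c v w * phi w) = (if v = a then 1 else 0)"
  proof (rule solvable_system[OF fin])
    fix psi :: "_ \<Rightarrow> real"
    assume h: "\<forall>v\<in>V. (\<Sum>w\<in>V. c v w * psi w) = 0"
    have pb: "psi b = 0" using h cM[OF bV, where phi=psi] bV by simp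
    have lz: "laplacian V E psi v = 0" if "v \<in> V" "v \<noteq> b" for v
      using h cM[OF that(1), where phi=psi] that by simp
    have "(\<Sum>v\<in>V. psi v * laplacian V E psi v) = 0"
      by (rule sum.neutral) (metis lz pb mult_zero_left mult_zero_right)
    then have z: "(\<Sum>(v,w)\<in>dpairs V E V. (psi v - psi w) * (psi v - psi w)) = 0"
      using energy_identity[OF fin sym, where psi=psi and phi=psi] by simp
    have "\<forall>p\<in>dpairs V E V. (\<lambda>(v,w). (psi v - psi w) * (psi v - psi w)) p = 0"
      by (rule iffD1[OF sum_nonneg_eq_0_iff z]) (auto simp: finite_dpairs fin)
    then have "\<forall>v\<in>V. \<forall>w\<in>V. E v w \<longrightarrow> psi v = psi w"
      by (auto simp: dpairs_def)
    then show "\<forall>v\<in>V. psi v = 0" using conn[of psi] pb by simp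
  qed
  then obtain phi where phi: "\<And>v. v \<in> V \<Longrightarrow> (\<Sum>w\<in>V. c v w * phi w) = (if v = a then 1 else 0)"
    by blast
  have L: "laplacian V E phi v = (if v = a then 1 else 0)" if "v \<in> V" "v \<noteq> b" for v
    using phi[OF that(1)] cM[OF that(1), where phi=phi] that by simp
  have "(\<Sum>v\<in>V. laplacian V E phi v) = 0"
    using flux[OF fin subset_refl sym, where phi=phi] by simp
  moreover have "(\<Sum>v\<in>V. laplacian V E phi v) = laplacian V E phi b + (\<Sum>v\<in>V - {b}. laplacian V E phi v)"
    using fin bV by (simp add: sum.remove)
  moreover have "(\<Sum>v\<in>V - {b}. laplacian V E phi v) = (\<Sum>v\<in>V - {b}. if v = a then 1 else 0)"
    using L by (intro sum.cong) auto
  moreover have "\<dots> = 1" using fin aV ab by simp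
  ultimately have "laplacian V E phi b = -1" by simp
  then show ?thesis unfolding unit_current_potential_def using L ab
    by (intro exI[of _ phi]) auto
qed



lemma resistance_bound:
  fixes f :: "'v \<Rightarrow> nat" and phi :: "'v \<Rightarrow> real"
  assumes fin: "finite V" and sym: "\<And>u v. E u v \<longleftrightarrow> E v u"
    and aV: "a \<in> V" and bV: "b \<in> V" and ab: "a \<noteq> b"
    and pot: "unit_current_potential V E a b phi"
    and lip: "\<And>u v. u \<in> V \<Longrightarrow> v \<in> V \<Longrightarrow> E u v \<Longrightarrow> f v \<le> f u + 1"
    and sep: "\<And>k. 1 \<le> k \<Longrightarrow> k \<le> n \<Longrightarrow> (f a < k) \<noteq> (f b < k)"
    and cardP: "\<And>k. 1 \<le> k \<Longrightarrow> k \<le> n \<Longrightarrow>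
       card {(v,w). v \<in> V \<and> w \<in> V \<and> E v w \<and> f v < k \<and> \<not> f w < k} \<le> 2 * k"
  shows "phi a - phi b \<ge> (1/2) * (\<Sum>k=1..n. 1 / real k)"
proof -
  have L: "\<And>v. v \<in> V \<Longrightarrow> laplacian V E phi v = (if v = a then 1 else if v = b then -1 else 0)"
    using pot unfolding unit_current_potential_def by blast
  define sq where "sq = (\<lambda>(v::'v,w::'v). (phi v - phi w)^2)"
  define D where "D = dpairs V E V"
  have finD: "finite D" unfolding D_def by (rule finite_dpairs[OF fin fin])
  have "(\<Sum>v\<in>V. phi v * laplacian V E phi v) = (\<Sum>v\<in>V. (if v = a then phi a else 0) + (if v = b then - phi b else 0))"
    using ab by (intro sum.cong) (auto simp: L)
  also have "\<dots> = phi a - phi b" using fin aV bV by (simp add: sum.distrib)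
  finally have R1: "phi a - phi b = (\<Sum>v\<in>V. phi v * laplacian V E phi v)" by simp
  have R: "phi a - phi b = (1/2) * sum sq D"
    unfolding R1 energy_identity[OF fin sym] D_def sq_def
    by (simp add: power2_eq_square case_prod_unfold)
  define S where "S k = {v \<in> V. f v < k}" for k
  define P where "P k = {(v,w). v \<in> S k \<and> w \<in> V - S k \<and> E v w}" for k
  have PD: "P k \<subseteq> D" for k by (auto simp: P_def S_def D_def dpairs_def)
  have finP: "finite (P k)" for k using finite_subset[OF PD finD] .
  have Pchar: "f v = k - 1 \<and> f w = k \<and> k \<ge> 1" if "(v,w) \<in> P k" for v w k
  proof -
    from that have "v \<in> V" "w \<in> V" "E v w" "f v < k" "\<not> f w < k" by (auto simp: P_def S_def)
    moreover have "f w \<le> f v + 1" using lip calculation by blast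
    moreover have "f v \<le> f w + 1" using lip calculation sym by blast
    ultimately show ?thesis by linarith
  qed
  have lowP: "sum sq (P k) \<ge> 1 / (2 * real k)" if k: "1 \<le> k" "k \<le> n" for k
  proof -
    have "(\<Sum>v\<in>S k. laplacian V E phi v) = (\<Sum>(v,w)\<in>P k. phi v - phi w)"
      unfolding P_def by (rule flux[OF fin _ sym]) (auto simp: S_def)
    moreover have "(\<Sum>v\<in>S k. laplacian V E phi v) =
       (\<Sum>v\<in>S k. (if v = a then 1 else 0) - (if v = b then 1 else 0))"
      using ab by (intro sum.cong) (auto simp: L S_def)
    moreover have "\<dots> = (if a \<in> S k then 1 else 0) - (if b \<in> S k then 1 else 0)"
      using fin by (simp add: sum_subtractf S_def)
    moreover have "(if a \<in> S k then 1 else 0) - (if b \<in> S k then 1 else 0) = (1::real) \<or>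
        (if a \<in> S k then 1 else 0) - (if b \<in> S k then 1 else 0) = (-1::real)"
      using sep[OF k] aV bV by (auto simp: S_def)
    ultimately have s1: "(\<Sum>(v,w)\<in>P k. phi v - phi w)^2 = 1" by auto
    have "(\<Sum>(v,w)\<in>P k. phi v - phi w)^2 \<le> real (card (P k)) * (\<Sum>p\<in>P k. ((\<lambda>(v,w). phi v - phi w) p)^2)"
      by (rule cauchy_schwarz_sum[OF finP])
    also have "(\<Sum>p\<in>P k. ((\<lambda>(v,w). phi v - phi w) p)^2) = sum sq (P k)"
      unfolding sq_def by (simp add: case_prod_unfold)
    finally have cs: "1 \<le> real (card (P k)) * sum sq (P k)" using s1 by simp
    have "P k = {(v,w). v \<in> V \<and> w \<in> V \<and> E v w \<and> f v < k \<and> \<not> f w < k}"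
      by (auto simp: P_def S_def)
    then have cP: "real (card (P k)) \<le> 2 * real k" using cardP[OF k] by simp
    have sq0: "sum sq (P k) \<ge> 0" unfolding sq_def by (intro sum_nonneg) auto
    have "0 < real (card (P k))" using cs sq0
      by (metis less_eq_real_def mult_not_zero not_one_le_zero of_nat_0_less_iff zero_less_iff_neq_zero of_nat_0)
    then have "1 / (2 * real k) \<le> 1 / real (card (P k))" using cP k
      by (intro divide_left_mono) auto
    also have "\<dots> \<le> sum sq (P k)" using cs \<open>0 < real (card (P k))\<close>
      by (simp add: divide_le_eq mult.commute)
    finally show ?thesis .
  qed
  define Q where "Q k = P k \<union> prod.swap ` P k" for k
  have sqswap: "sum sq (prod.swap ` P k) = sum sq (P k)" for k
  proof -
    have "sum sq (prod.swap ` P k) = sum (sq \<circ> prod.swap) (P k)"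
      by (rule sum.reindex) (rule inj_onI, metis swap_swap)
    also have "sq \<circ> prod.swap = sq" unfolding sq_def by (auto simp: fun_eq_iff power2_commute)
    finally show ?thesis .
  qed
  have sumQ: "sum sq (Q k) = 2 * sum sq (P k)" for k
  proof -
    have "P k \<inter> prod.swap ` P k = {}"
    proof -
      { fix v w assume "(v,w) \<in> P k" "(v,w) \<in> prod.swap ` P k"
        then have "(w,v) \<in> P k" by auto
        then have False using Pchar[of v w k] Pchar[of w v k] \<open>(v,w) \<in> P k\<close> by auto }
      then show ?thesis by auto
    qed
    then have "sum sq (Q k) = sum sq (P k) + sum sq (prod.swap ` P k)"
      unfolding Q_def by (intro sum.union_disjoint) (auto simp: finP)
    then show ?thesis using sqswap by simp
  qed
  have QD: "Q k \<subseteq> D" for k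
    using sym by (auto simp: Q_def D_def dpairs_def P_def S_def)
  have disj: "Q j \<inter> Q k = {}" if "j \<noteq> k" for j k
  proof -
    { fix v w assume "(v,w) \<in> Q j" "(v,w) \<in> Q k"
      then have False using Pchar[of v w j] Pchar[of w v j] Pchar[of v w k] Pchar[of w v k] that
        unfolding Q_def by auto }
    then show ?thesis by auto
  qed
  have "(\<Sum>k=1..n. 1 / real k) \<le> (\<Sum>k=1..n. sum sq (Q k))"
  proof (rule sum_mono)
    fix k assume "k \<in> {1..n}"
    then have "1 / (2 * real k) \<le> sum sq (P k)" using lowP by auto
    then show "1 / real k \<le> sum sq (Q k)" using sumQ[of k] by (simp add: field_simps)
  qed
  also have "(\<Sum>k=1..n. sum sq (Q k)) = sum sq (\<Union>k\<in>{1..n}. Q k)"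
    by (rule sum.UNION_disjoint[symmetric]) (auto simp: finite_subset[OF QD finD] dest: disj)
  also have "\<dots> \<le> sum sq D"
    by (rule sum_mono2[OF finD]) (use QD in \<open>auto simp: sq_def\<close>)
  finally show ?thesis using R by simp
qed



lemma tri_fin: "finite (tri_V n)"
  by (rule finite_subset[of _ "{0..n} \<times> {0..n}"]) (auto simp: tri_V_def)

lemma tri_sym: "tri_E n u v \<longleftrightarrow> tri_E n v u"
  unfolding tri_E_def by auto

lemma tri_conn:
  fixes psi :: "nat \<times> nat \<Rightarrow> real"
  assumes h: "\<forall>v\<in>tri_V n. \<forall>w\<in>tri_V n. tri_E n v w \<longrightarrow> psi v = psi w"
    and bV: "b \<in> tri_V n"
  shows "\<forall>v\<in>tri_V n. psi v = psi b"
proof -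
  have col: "psi (i,0) = psi (0,0)" if "i \<le> n" for i
    using that
  proof (induction i)
    case (Suc i)
    have "(i,0) \<in> tri_V n" "(Suc i,0) \<in> tri_V n" "tri_E n (i,0) (Suc i,0)"
      using Suc.prems by (auto simp: tri_V_def tri_E_def)
    then have "psi (i,0) = psi (Suc i, 0)" using h by blast
    then show ?case using Suc by simp
  qed simp
  have row: "psi (i,j) = psi (i,0)" if "j \<le> i" "i \<le> n" for i j
    using that
  proof (induction j)
    case (Suc j)
    have "(i,j) \<in> tri_V n" "(i,Suc j) \<in> tri_V n" "tri_E n (i,j) (i,Suc j)"
      using Suc.prems by (auto simp: tri_V_def tri_E_def)
    then have "psi (i,j) = psi (i, Suc j)" using h by blast
    then show ?case using Suc by simp
  qed simp
  have all: "psi v = psi (0,0)" if "v \<in> tri_V n" for v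
  proof -
    obtain i j where v: "v = (i,j)" by (cases v)
    then have "j \<le> i" "i \<le> n" using that by (auto simp: tri_V_def)
    then show ?thesis using row[of j i] col[of i] v by simp
  qed
  show ?thesis using all bV by simp
qed

lemma tri_deg2:
  assumes n: "n \<ge> 1" and vV: "v \<in> tri_V n" and dg: "gdegree (tri_V n) (tri_E n) v = 2"
  shows "v = (0,0) \<or> v = (n,0) \<or> v = (n,n)"
proof (rule ccontr)
  assume nc: "\<not> ?thesis"
  obtain i j where v: "v = (i,j)" by (cases v)
  have ji: "j \<le> i" "i \<le> n" using vV v by (auto simp: tri_V_def)
  have finN: "finite (nbrs (tri_V n) (tri_E n) v)" using tri_fin by (simp add: nbrs_def)
  have "\<exists>x y z. x \<noteq> y \<and> x \<noteq> z \<and> y \<noteq> z \<and> {x,y,z} \<subseteq> nbrs (tri_V n) (tri_E n) v"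
  proof -
    consider "0 < j" "j < i" | "j = 0" "0 < i" "i < n" | "j = i" "0 < i" "i < n"
      using nc v ji by (cases "j = 0"; cases "j = i"; auto; linarith)
    then show ?thesis
    proof cases
      case 1
      then show ?thesis using ji vV v
        by (intro exI[of _ "(i,j-1)"] exI[of _ "(i,j+1)"] exI[of _ "(i-1,j)"])
           (auto simp: nbrs_def tri_E_def tri_V_def)
    next
      case 2
      then show ?thesis using ji vV v
        by (intro exI[of _ "(i-1,0)"] exI[of _ "(i+1,0)"] exI[of _ "(i,1)"])
           (auto simp: nbrs_def tri_E_def tri_V_def)
    next
      case 3
      then show ?thesis using ji vV v
        by (intro exI[of _ "(i-1,i-1)"] exI[of _ "(i,i-1)"] exI[of _ "(i+1,i+1)"])
           (auto simp: nbrs_def tri_E_def tri_V_def)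
    qed
  qed
  then obtain x y z where xyz: "x \<noteq> y" "x \<noteq> z" "y \<noteq> z" "{x,y,z} \<subseteq> nbrs (tri_V n) (tri_E n) v"
    by blast
  have "card {x,y,z} \<le> card (nbrs (tri_V n) (tri_E n) v)" by (rule card_mono[OF finN xyz(4)])
  then show False using xyz dg by (simp add: gdegree_def)
qed

lemma card_cut_fst:
  assumes "1 \<le> k"
  shows "card {(v,w). v \<in> tri_V n \<and> w \<in> tri_V n \<and> tri_E n v w \<and> fst v < k \<and> \<not> fst w < k} \<le> 2 * k"
proof -
  let ?A = "(\<lambda>j. ((k-1,j),(k,j))) ` {0..<k}"
  let ?B = "(\<lambda>j. ((k-1,j),(k,j+1))) ` {0..<k}"
  have "{(v,w). v \<in> tri_V n \<and> w \<in> tri_V n \<and> tri_E n v w \<and> fst v < k \<and> \<not> fst w < k} \<subseteq> ?A \<union> ?B"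
  proof (clarify)
    fix i j i' j' assume h: "(i,j) \<in> tri_V n" "(i',j') \<in> tri_V n" "tri_E n (i,j) (i',j')"
      "fst (i,j) < k" "\<not> fst (i',j') < k" "((i,j),(i',j')) \<notin> ?B"
    then have "i = k - 1" "i' = k" "j' = j \<or> j' = j + 1" "j < k"
      by (auto simp: tri_E_def tri_V_def)
    with h show "((i,j),(i',j')) \<in> ?A" by (auto simp: image_iff)
  qed
  then have "card {(v,w). v \<in> tri_V n \<and> w \<in> tri_V n \<and> tri_E n v w \<and> fst v < k \<and> \<not> fst w < k}
      \<le> card (?A \<union> ?B)" by (rule card_mono[rotated]) auto
  also have "\<dots> \<le> card ?A + card ?B" by (rule card_Un_le)
  also have "\<dots> \<le> k + k" by (intro add_mono card_image_le[THEN order_trans]) auto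
  finally show ?thesis by simp
qed

lemma card_cut_snd:
  assumes "1 \<le> k" "k \<le> n"
  shows "card {(v,w). v \<in> tri_V n \<and> w \<in> tri_V n \<and> tri_E n v w \<and> n - snd v < k \<and> \<not> n - snd w < k} \<le> 2 * k"
proof -
  let ?A = "(\<lambda>i. ((i,n+1-k),(i,n-k))) ` {n+1-k..n}"
  let ?B = "(\<lambda>i. ((i,n+1-k),(i-1,n-k))) ` {n+1-k..n}"
  have "{(v,w). v \<in> tri_V n \<and> w \<in> tri_V n \<and> tri_E n v w \<and> n - snd v < k \<and> \<not> n - snd w < k} \<subseteq> ?A \<union> ?B"
  proof (clarify)
    fix i j i' j' assume h: "(i,j) \<in> tri_V n" "(i',j') \<in> tri_V n" "tri_E n (i,j) (i',j')"
      "n - snd (i,j) < k" "\<not> n - snd (i',j') < k" "((i,j),(i',j')) \<notin> ?B"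
    then have "j = n + 1 - k" "j' = n - k" "i' = i \<or> i' = i - 1" "n+1-k \<le> i" "i \<le> n"
      using assms by (auto simp: tri_E_def tri_V_def)
    with h show "((i,j),(i',j')) \<in> ?A" by (auto simp: image_iff)
  qed
  then have "card {(v,w). v \<in> tri_V n \<and> w \<in> tri_V n \<and> tri_E n v w \<and> n - snd v < k \<and> \<not> n - snd w < k}
      \<le> card (?A \<union> ?B)" by (rule card_mono[rotated]) auto
  also have "\<dots> \<le> card ?A + card ?B" by (rule card_Un_le)
  also have "\<dots> \<le> k + k" using assms by (intro add_mono card_image_le[THEN order_trans]) auto
  finally show ?thesis by simp
qed

theorem mainTheorem5:
  fixes n :: nat and a b :: "nat \<times> nat"
  assumes "n \<ge> 1"
    and "a \<in> tri_V n" and "b \<in> tri_V n" and "a \<noteq> b"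
    and "gdegree (tri_V n) (tri_E n) a = 2" and "gdegree (tri_V n) (tri_E n) b = 2"
  shows "resistance (tri_V n) (tri_E n) a b \<ge> (1/2) * (\<Sum>k=1..n. 1 / real k)"
proof -
  note n = assms(1) and aV = assms(2) and bV = assms(3) and ab = assms(4)
  have ex: "\<exists>phi. unit_current_potential (tri_V n) (tri_E n) a b phi"
    by (rule exists_potential[OF tri_fin tri_sym aV bV ab tri_conn]) (use bV in auto)
  define phi where "phi = (SOME phi. unit_current_potential (tri_V n) (tri_E n) a b phi)"
  have pot: "unit_current_potential (tri_V n) (tri_E n) a b phi"
    unfolding phi_def by (rule someI_ex[OF ex])
  have res: "resistance (tri_V n) (tri_E n) a b = phi a - phi b"
    unfolding resistance_def phi_def Let_def ..
  have ca: "a = (0,0) \<or> a = (n,0) \<or> a = (n,n)" by (rule tri_deg2[OF n aV assms(5)])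
  have cb: "b = (0,0) \<or> b = (n,0) \<or> b = (n,n)" by (rule tri_deg2[OF n bV assms(6)])
  show ?thesis unfolding res
  proof (cases "a = (0,0) \<or> b = (0,0)")
    case True
    show "phi a - phi b \<ge> (1/2) * (\<Sum>k=1..n. 1 / real k)"
    proof (rule resistance_bound[OF tri_fin tri_sym aV bV ab pot, where f = fst])
      show "fst v \<le> fst u + 1" if "u \<in> tri_V n" "v \<in> tri_V n" "tri_E n u v" for u v
        using that by (auto simp: tri_E_def)
      show "(fst a < k) \<noteq> (fst b < k)" if "1 \<le> k" "k \<le> n" for k
        using True ca cb ab that by auto
      show "card {(v,w). v \<in> tri_V n \<and> w \<in> tri_V n \<and> tri_E n v w \<and> fst v < k \<and> \<not> fst w < k} \<le> 2 * k"
        if "1 \<le> k" "k \<le> n" for k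
        using card_cut_fst[OF that(1)] .
    qed
  next
    case False
    show "phi a - phi b \<ge> (1/2) * (\<Sum>k=1..n. 1 / real k)"
    proof (rule resistance_bound[OF tri_fin tri_sym aV bV ab pot, where f = "\<lambda>v. n - snd v"])
      show "n - snd v \<le> n - snd u + 1" if "u \<in> tri_V n" "v \<in> tri_V n" "tri_E n u v" for u v
        using that by (auto simp: tri_E_def tri_V_def)
      show "(n - snd a < k) \<noteq> (n - snd b < k)" if "1 \<le> k" "k \<le> n" for k
        using False ca cb ab that by auto
      show "card {(v,w). v \<in> tri_V n \<and> w \<in> tri_V n \<and> tri_E n v w \<and> n - snd v < k \<and> \<not> n - snd w < k} \<le> 2 * k"
        if "1 \<le> k" "k \<le> n" for k
        using card_cut_snd[OF that] .
    qed
  qed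
qed


end
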